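(* Let $P$ be a weighted combinatorial optimization problem and let $(T_S)_{S \in P}$ be the decision trees (with continuous branching functions) of a deterministic algorithm $A$ for $P$. Then for every instance $(S,w)$, $S=(n,W,L,\mathrm{cost})$, there exists a function $h : \mathbb{R} \to Q^n$ with the following properties: - $h(0)=0$ and $h$ is continuous at $0$; - $W$ continues into direction $h$ at $w$; - every branching function of $T_S$ is decreasing, constant, or increasing into direction $h$ at $w$. Consequently, breaking every tie $v_u(w)=0$ by taking the left child iff $v_u$ is decreasing into direction $h$ at $w$ defines a tie-breaking policy under which $A$ uses symbolic perturbation. That is, every deterministic algorithm admits a symbolic perturbation tie-breaking policy.
   Context: Let $Q$ be a subfield of $\mathbb{R}$ (e.g. $\mathbb{R}$, $\mathbb{Q}$, or the real algebraic numbers). Equip $Q^n$ with the Euclidean metric $d$. For $x \in Q^n$ and $\epsilon>0$, the $\epsilon$-neighborhood of $x$ is $\{y \in Q^n \mid d(x,y)<\epsilon\}$. A neighborhood of $x$ is an $\epsilon$-neighborhood of $x$ for some $\epsilon>0$. A set $U \subseteq Q^n$ is open if it contains a neighborhood of each of its points. A set $X \subseteq Q^n$ is semi-open if for every $x \in X$ and every neighborhood $N$ of $x$ there is a non-empty open set $U \subseteq Q^n$ with $U \subseteq N \cap X$. For $x \in \mathbb{R}$, $\mathrm{sgn}(x) = x/|x|$ if $x \neq 0$ and $\mathrm{sgn}(0)=0$. Problems: A weighted combinatorial optimization (minimization) problem $P$ is a set of problem structures; each structure $S=(n,W,L,\mathrm{cost})$ consists of a positive integer $n$, a semi-open set $W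 \subseteq Q^n$ of admissible weight vectors, a finite non-empty set $L$ of feasible solutions, and a function $\mathrm{cost} : W \times L \to \mathbb{R}$ such that $\mathrm{cost}(\cdot,l)$ is continuous on $W$ for every $l \in L$. An instance is a pair $(S,w)$ with $S \in P$ and $w \in W$. Algorithms: A deterministic algorithm $A$ for $P$ assigns to each structure $S=(n,W,L,\mathrm{cost}) \in P$ a finite rooted binary decision tree $T_S$. Each leaf is labelled with an element of $L \cup \{l_f\}$, where $l_f \notin L$ is a special symbol representing failure. Each internal node $u$ is labelled with a continuous branching function $v_u : W \to Q$. On input $(S,w)$, $A$ starts at the root of $T_S$. At an internal node $u$ it moves to the left child if $v_u(w)<0$ and to the right child if $v_u(w)>0$. If $v_u(w)=0$ (a tie), it moves to the left or right child according to a deterministic tie-breaking policy, i.e. a rule fixing, for every instance $(S,w)$ and every internal node $u$ with $v_u(w)=0$, which child is taken. $A$ returns the label $A(S,w)$ of the leaf reached. Directions: Let $W \subseteq Q^n$ be semi-open, $w \in W$, and $h : \mathbb{R} \to Q^n$ with $h(0)=0$ and $h$ continuous at $0$. $W$ continues into direction $h$ at $w$ if there is $\delta>0$ such that for every $0<a<\delta$ some neighborhood of $w+h(a)$ is contained in $W$. If $W$ continues into direction $h$ at $w$ and $f : W \to Q$ is continuous, then $f$ is increasing (resp. constant, decreasing) into direction $h$ at $w$ if the following holds: there is $\delta>0$ such that for every $0<a<\delta$ there is a neighborhood $N_a \subseteq W$ of $w+h(a)$ with $\mathrm{sgn}(f(y)-f(w)) = 1$ (resp. $0$, $-1$) for all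 $y \in N_a$. Symbolic perturbation: $A$ uses symbolic perturbation if, for every instance $(S,w)$ with $S=(n,W,L,\mathrm{cost})$, there exists a function $h_{S,w} : \mathbb{R} \to Q^n$ satisfying all of the following: - $h_{S,w}(0)=0$ and $h_{S,w}$ is continuous at $0$; - $W$ continues into direction $h_{S,w}$ at $w$; - every branching function of $T_S$ is decreasing, constant, or increasing into direction $h_{S,w}$ at $w$; - whenever a tie $v_u(w)=0$ occurs at an internal node $u$ on input $(S,w)$, $A$ takes the left child if $v_u$ is decreasing into direction $h_{S,w}$ at $w$, and the right child otherwise. *)

theory Defs
  imports Complex_Main
begin

text \<open>Points of Q^n are represented as functions nat \<Rightarrow> real whose first n
  coordinates lie in Q and whose remaining coordinates are 0.\<close>

type_synonym vec = "nat \<Rightarrow> real"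

definition subfield_real :: "real set \<Rightarrow> bool" where
  "subfield_real Q \<longleftrightarrow> 0 \<in> Q \<and> 1 \<in> Q \<and>
     (\<forall>x\<in>Q. \<forall>y\<in>Q. x + y \<in> Q \<and> x * y \<in> Q) \<and>
     (\<forall>x\<in>Q. - x \<in> Q) \<and> (\<forall>x\<in>Q. x \<noteq> 0 \<longrightarrow> inverse x \<in> Q)"

definition Qvec :: "real set \<Rightarrow> nat \<Rightarrow> vec set" where
  "Qvec Q n = {x. (\<forall>i<n. x i \<in> Q) \<and> (\<forall>i\<ge>n. x i = 0)}"

definition vdist :: "nat \<Rightarrow> vec \<Rightarrow> vec \<Rightarrow> real" where
  "vdist n x y = sqrt (\<Sum>i<n. (x i - y i)\<^sup>2)"

definition vadd :: "vec \<Rightarrow> vec \<Rightarrow> vec" where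
  "vadd x y = (\<lambda>i. x i + y i)"

definition nbhd :: "real set \<Rightarrow> nat \<Rightarrow> vec \<Rightarrow> real \<Rightarrow> vec set" where
  "nbhd Q n x e = {y \<in> Qvec Q n. vdist n x y < e}"

definition openQ :: "real set \<Rightarrow> nat \<Rightarrow> vec set \<Rightarrow> bool" where
  "openQ Q n U \<longleftrightarrow> U \<subseteq> Qvec Q n \<and> (\<forall>x\<in>U. \<exists>e>0. nbhd Q n x e \<subseteq> U)"

definition semi_open :: "real set \<Rightarrow> nat \<Rightarrow> vec set \<Rightarrow> bool" where
  "semi_open Q n X \<longleftrightarrow> X \<subseteq> Qvec Q n \<and>
     (\<forall>x\<in>X. \<forall>e>0. \<exists>U. U \<noteq> {} \<and> openQ Q n U \<and> U \<subseteq> nbhd Q n x e \<inter> X)"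

definition contW :: "nat \<Rightarrow> vec set \<Rightarrow> (vec \<Rightarrow> real) \<Rightarrow> bool" where
  "contW n W f \<longleftrightarrow> (\<forall>x\<in>W. \<forall>e>0. \<exists>d>0. \<forall>y\<in>W. vdist n x y < d \<longrightarrow> \<bar>f y - f x\<bar> < e)"

record 'l pstruct =
  dim :: nat
  wts :: "vec set"
  sols :: "'l set"
  cost :: "vec \<Rightarrow> 'l \<Rightarrow> real"

definition structure_ok :: "real set \<Rightarrow> 'l pstruct \<Rightarrow> bool" where
  "structure_ok Q S \<longleftrightarrow> dim S > 0 \<and> semi_open Q (dim S) (wts S) \<and>
     finite (sols S) \<and> sols S \<noteq> {} \<and>
     (\<forall>l\<in>sols S. contW (dim S) (wts S) (\<lambda>w. cost S w l))"

definition wcop :: "real set \<Rightarrow> 'l pstruct set \<Rightarrow> bool" where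
  "wcop Q P \<longleftrightarrow> (\<forall>S\<in>P. structure_ok Q S)"

text \<open>Finite rooted binary decision trees; a leaf labelled None is the failure symbol.\<close>
datatype 'l dtree = Leaf "'l option" | Node "vec \<Rightarrow> real" "'l dtree" "'l dtree"

fun leaf_labels :: "'l dtree \<Rightarrow> 'l option set" where
  "leaf_labels (Leaf x) = {x}"
| "leaf_labels (Node v l r) = leaf_labels l \<union> leaf_labels r"

fun branchfuns :: "'l dtree \<Rightarrow> (vec \<Rightarrow> real) set" where
  "branchfuns (Leaf x) = {}"
| "branchfuns (Node v l r) = insert v (branchfuns l \<union> branchfuns r)"

definition tree_ok :: "real set \<Rightarrow> 'l pstruct \<Rightarrow> 'l dtree \<Rightarrow> bool" where
  "tree_ok Q S T \<longleftrightarrow> (\<forall>x\<in>leaf_labels T. \<forall>l. x = Some l \<longrightarrow> l \<in> sols S) \<and>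
     (\<forall>v\<in>branchfuns T. (\<forall>w\<in>wts S. v w \<in> Q) \<and> contW (dim S) (wts S) v)"

definition det_alg :: "real set \<Rightarrow> 'l pstruct set \<Rightarrow> ('l pstruct \<Rightarrow> 'l dtree) \<Rightarrow> bool" where
  "det_alg Q P A \<longleftrightarrow> (\<forall>S\<in>P. tree_ok Q S (A S))"

text \<open>Tie-breaking policy: for a structure, a weight vector and an internal node
  (identified by its position, the list of moves from the root, True = left),
  True means "take the left child".\<close>
type_synonym 'l policy = "'l pstruct \<Rightarrow> vec \<Rightarrow> bool list \<Rightarrow> bool"

definition direction_ok :: "real set \<Rightarrow> nat \<Rightarrow> (real \<Rightarrow> vec) \<Rightarrow> bool" where
  "direction_ok Q n h \<longleftrightarrow> (\<forall>a. h a \<in> Qvec Q n) \<and> h 0 = (\<lambda>_. 0) \<and>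
     (\<forall>e>0. \<exists>d>0. \<forall>a. \<bar>a\<bar> < d \<longrightarrow> vdist n (h a) (h 0) < e)"

definition continues_into :: "real set \<Rightarrow> nat \<Rightarrow> vec set \<Rightarrow> (real \<Rightarrow> vec) \<Rightarrow> vec \<Rightarrow> bool" where
  "continues_into Q n W h w \<longleftrightarrow>
     (\<exists>d>0. \<forall>a. 0 < a \<and> a < d \<longrightarrow> (\<exists>e>0. nbhd Q n (vadd w (h a)) e \<subseteq> W))"

definition moves_into :: "real \<Rightarrow> real set \<Rightarrow> nat \<Rightarrow> vec set \<Rightarrow> (vec \<Rightarrow> real) \<Rightarrow> (real \<Rightarrow> vec) \<Rightarrow> vec \<Rightarrow> bool" where
  "moves_into s Q n W f h w \<longleftrightarrow>
     (\<exists>d>0. \<forall>a. 0 < a \<and> a < d \<longrightarrow>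
        (\<exists>e>0. nbhd Q n (vadd w (h a)) e \<subseteq> W \<and>
               (\<forall>y\<in>nbhd Q n (vadd w (h a)) e. sgn (f y - f w) = s)))"

definition increasing_into where "increasing_into = moves_into 1"
definition constant_into where "constant_into = moves_into 0"
definition decreasing_into where "decreasing_into = moves_into (-1)"

definition good_direction :: "real set \<Rightarrow> 'l pstruct \<Rightarrow> 'l dtree \<Rightarrow> vec \<Rightarrow> (real \<Rightarrow> vec) \<Rightarrow> bool" where
  "good_direction Q S T w h \<longleftrightarrow> direction_ok Q (dim S) h \<and>
     continues_into Q (dim S) (wts S) h w \<and>
     (\<forall>v\<in>branchfuns T. decreasing_into Q (dim S) (wts S) v h w \<or>
        constant_into Q (dim S) (wts S) v h w \<or> increasing_into Q (dim S) (wts S) v h w)"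

fun ties_follow :: "real set \<Rightarrow> 'l pstruct \<Rightarrow> 'l policy \<Rightarrow> vec \<Rightarrow> (real \<Rightarrow> vec)
                    \<Rightarrow> bool list \<Rightarrow> 'l dtree \<Rightarrow> bool" where
  "ties_follow Q S tb w h pos (Leaf x) = True"
| "ties_follow Q S tb w h pos (Node v l r) =
     ((v w = 0 \<longrightarrow> (tb S w pos \<longleftrightarrow> decreasing_into Q (dim S) (wts S) v h w)) \<and>
      (if v w < 0 \<or> (v w = 0 \<and> tb S w pos)
       then ties_follow Q S tb w h (pos @ [True]) l
       else ties_follow Q S tb w h (pos @ [False]) r))"

definition uses_symbolic_perturbation ::
  "real set \<Rightarrow> 'l pstruct set \<Rightarrow> ('l pstruct \<Rightarrow> 'l dtree) \<Rightarrow> 'l policy \<Rightarrow> bool" where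
  "uses_symbolic_perturbation Q P A tb \<longleftrightarrow>
     (\<forall>S\<in>P. \<forall>w\<in>wts S. \<exists>h. good_direction Q S (A S) w h \<and> ties_follow Q S tb w h [] (A S))"

end

theory Submission
  imports Defs "HOL-Analysis.L2_Norm" "HOL-Library.FuncSet"
begin

lemma vdist_L2: "vdist n x y = L2_set (\<lambda>i. x i - y i) {..<n}"
  by (simp add: vdist_def L2_set_def)

lemma vdist_sym: "vdist n x y = vdist n y x"
  unfolding vdist_def by (simp add: power2_commute)

lemma vdist_self: "vdist n x x = 0"
  unfolding vdist_def by simp

lemma vdist_tri: "vdist n x z \<le> vdist n x y + vdist n y z"
proof -
  have "vdist n x z = L2_set (\<lambda>i. (x i - y i) + (y i - z i)) {..<n}"
    by (simp add: vdist_L2)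
  also have "\<dots> \<le> vdist n x y + vdist n y z"
    unfolding vdist_L2 by (rule L2_set_triangle_ineq)
  finally show ?thesis .
qed

lemma nbhd_open: "openQ Q n (nbhd Q n x e)"
  unfolding openQ_def
proof (intro conjI ballI)
  show "nbhd Q n x e \<subseteq> Qvec Q n" by (auto simp: nbhd_def)
  fix y assume y: "y \<in> nbhd Q n x e"
  hence "vdist n x y < e" by (simp add: nbhd_def)
  moreover have "nbhd Q n y (e - vdist n x y) \<subseteq> nbhd Q n x e"
  proof
    fix z assume "z \<in> nbhd Q n y (e - vdist n x y)"
    thus "z \<in> nbhd Q n x e" using vdist_tri[of n x z y] by (auto simp: nbhd_def)
  qed
  ultimately show "\<exists>e'>0. nbhd Q n y e' \<subseteq> nbhd Q n x e" by (intro exI[of _ "e - vdist n x y"]) auto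
qed

lemma sgn_same:
  fixes a b :: real
  assumes "\<bar>b - a\<bar> < \<bar>a\<bar>"
  shows "sgn b = sgn a"
  using assms by (auto simp: sgn_if split: if_splits)

lemma refine1:
  assumes "openQ Q n U" "U \<noteq> {}" "U \<subseteq> W" "contW n W f"
  shows "\<exists>U'. U' \<noteq> {} \<and> openQ Q n U' \<and> U' \<subseteq> U \<and>
     (\<forall>x\<in>U'. \<forall>y\<in>U'. sgn (f y - c) = sgn (f x - c))"
proof (cases "\<forall>y\<in>U. f y = c")
  case True
  thus ?thesis using assms by (intro exI[of _ U]) auto
next
  case False
  then obtain x where x: "x \<in> U" "f x \<noteq> c" by auto
  define r where "r = \<bar>f x - c\<bar>"
  have r: "r > 0" using x by (simp add: r_def)
  obtain d where d: "d > 0" "\<forall>y\<in>W. vdist n x y < d \<longrightarrow> \<bar>f y - f x\<bar> < r"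
  proof -
    have xW: "x \<in> W" using x(1) assms(3) by blast
    have "\<forall>e>0. \<exists>d>0. \<forall>y\<in>W. vdist n x y < d \<longrightarrow> \<bar>f y - f x\<bar> < e"
      using assms(4) xW unfolding contW_def by simp
    thus ?thesis using r that by blast
  qed
  obtain e where e: "e > 0" "nbhd Q n x e \<subseteq> U"
    using assms(1) x(1) unfolding openQ_def by blast
  define U' where "U' = nbhd Q n x (min d e)"
  have xQ: "x \<in> Qvec Q n" using assms(1) x(1) unfolding openQ_def by blast
  have xU': "x \<in> U'" using xQ d e by (simp add: U'_def nbhd_def vdist_self)
  have sub: "U' \<subseteq> U" using e by (auto simp: U'_def nbhd_def)
  have "\<forall>y\<in>U'. sgn (f y - c) = sgn (f x - c)"
  proof
    fix y assume y: "y \<in> U'"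
    hence "y \<in> W" "vdist n x y < d" using sub assms(3) by (auto simp: U'_def nbhd_def)
    hence "\<bar>f y - f x\<bar> < r" using d by blast
    hence "\<bar>(f y - c) - (f x - c)\<bar> < \<bar>f x - c\<bar>" by (simp add: r_def)
    thus "sgn (f y - c) = sgn (f x - c)" by (rule sgn_same)
  qed
  hence all: "\<forall>z\<in>U'. \<forall>y\<in>U'. sgn (f y - c) = sgn (f z - c)"
  proof (intro ballI)
    fix z y assume H: "\<forall>y\<in>U'. sgn (f y - c) = sgn (f x - c)" and z: "z \<in> U'" and y: "y \<in> U'"
    have "sgn (f y - c) = sgn (f x - c)" using H y by (rule bspec)
    moreover have "sgn (f z - c) = sgn (f x - c)" using H z by (rule bspec)
    ultimately show "sgn (f y - c) = sgn (f z - c)" by (rule trans[OF _ sym])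
  qed
  have ne: "U' \<noteq> {}" using xU' by blast
  have op: "openQ Q n U'" unfolding U'_def by (rule nbhd_open)
  show ?thesis using ne op sub all by blast
qed

definition goodU :: "real set \<Rightarrow> nat \<Rightarrow> (vec \<Rightarrow> real) set \<Rightarrow> vec \<Rightarrow> vec set \<Rightarrow> vec set \<Rightarrow> bool" where
  "goodU Q n F w U U' \<longleftrightarrow> U' \<noteq> {} \<and> openQ Q n U' \<and> U' \<subseteq> U \<and>
     (\<forall>f\<in>F. \<forall>x\<in>U'. \<forall>y\<in>U'. sgn (f y - f w) = sgn (f x - f w))"

lemma refineF_aux:
  assumes "finite F"
  shows "\<forall>U. (\<forall>f\<in>F. contW n W f) \<and> openQ Q n U \<and> U \<noteq> {} \<and> U \<subseteq> W \<longrightarrow> (\<exists>U'. goodU Q n F w U U')"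
  using assms
proof (induction F rule: finite_induct)
  case empty
  show ?case unfolding goodU_def
  proof (intro allI impI)
    fix U assume "(\<forall>f\<in>{}. contW n W f) \<and> openQ Q n U \<and> U \<noteq> {} \<and> U \<subseteq> W"
    thus "\<exists>U'. U' \<noteq> {} \<and> openQ Q n U' \<and> U' \<subseteq> U \<and>
     (\<forall>f\<in>{}. \<forall>x\<in>U'. \<forall>y\<in>U'. sgn (f y - f w) = sgn (f x - f w))"
      by (intro exI[of _ U]) simp
  qed
next
  case (insert g F)
  show ?case
  proof (intro allI impI)
    fix U assume H: "(\<forall>f\<in>insert g F. contW n W f) \<and> openQ Q n U \<and> U \<noteq> {} \<and> U \<subseteq> W"
    have cI: "\<forall>f\<in>insert g F. contW n W f" using H by (rule conjunct1)
    have oU: "openQ Q n U" using H by (elim conjE)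
    have neU: "U \<noteq> {}" using H by (elim conjE)
    have UW: "U \<subseteq> W" using H by (elim conjE)
    have cF: "\<forall>f\<in>F. contW n W f"
    proof
      fix f assume "f \<in> F" hence "f \<in> insert g F" by (rule insertI2)
      with cI show "contW n W f" by (rule bspec)
    qed
    have g: "contW n W g" using cI insertI1 by (rule bspec)
    have "\<exists>U'. goodU Q n F w U U'"
      using insert.IH[rule_format, OF conjI[OF cF conjI[OF oU conjI[OF neU UW]]]] .
    then obtain U1 where "goodU Q n F w U U1" ..
    hence U1: "U1 \<noteq> {}" "openQ Q n U1" "U1 \<subseteq> U"
       "\<forall>f\<in>F. \<forall>x\<in>U1. \<forall>y\<in>U1. sgn (f y - f w) = sgn (f x - f w)"
      unfolding goodU_def by blast+
    have U1W: "U1 \<subseteq> W" using U1(3) UW by (rule subset_trans)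
    from refine1[OF U1(2) U1(1) U1W g, of "g w"] obtain U2 where U2: "U2 \<noteq> {}" "openQ Q n U2" "U2 \<subseteq> U1"
       "\<forall>x\<in>U2. \<forall>y\<in>U2. sgn (g y - g w) = sgn (g x - g w)"
      by (elim exE conjE)
    have sub: "U2 \<subseteq> U" using U2(3) U1(3) by (rule subset_trans)
    have all: "\<forall>f\<in>insert g F. \<forall>x\<in>U2. \<forall>y\<in>U2. sgn (f y - f w) = sgn (f x - f w)"
    proof (intro ballI)
      fix f x y assume f: "f \<in> insert g F" and x: "x \<in> U2" and y: "y \<in> U2"
      show "sgn (f y - f w) = sgn (f x - f w)"
      proof (cases "f = g")
        case True
        have "sgn (g y - g w) = sgn (g x - g w)" using U2(4) x y by blast
        thus ?thesis using True by (simp only:)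
      next
        case False
        hence "f \<in> F" using f by simp
        moreover have "x \<in> U1" "y \<in> U1" using x y U2(3) by (auto simp del: )
        ultimately show ?thesis using U1(4) by blast
      qed
    qed
    have "goodU Q n (insert g F) w U U2" unfolding goodU_def using U2(1,2) sub all by (intro conjI)
    thus "\<exists>U'. goodU Q n (insert g F) w U U'" by (rule exI)
  qed
qed

lemma refineF:
  assumes "finite F" "\<forall>f\<in>F. contW n W f" "openQ Q n U" "U \<noteq> {}" "U \<subseteq> W"
  shows "\<exists>U'. U' \<noteq> {} \<and> openQ Q n U' \<and> U' \<subseteq> U \<and>
     (\<forall>f\<in>F. \<forall>x\<in>U'. \<forall>y\<in>U'. sgn (f y - f w) = sgn (f x - f w))"
  using refineF_aux[OF assms(1), of n W Q w] assms(2-5) unfolding goodU_def by blast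

lemma Qvec_diff:
  assumes "subfield_real Q" "x \<in> Qvec Q n" "w \<in> Qvec Q n"
  shows "(\<lambda>i. x i - w i) \<in> Qvec Q n"
proof -
  have add: "\<And>a b. a \<in> Q \<Longrightarrow> b \<in> Q \<Longrightarrow> a + b \<in> Q" and neg: "\<And>a. a \<in> Q \<Longrightarrow> - a \<in> Q"
    using assms(1) unfolding subfield_real_def by blast+
  have "x i - w i \<in> Q" if "i < n" for i
  proof -
    have "x i \<in> Q" "w i \<in> Q" using assms(2,3) that unfolding Qvec_def by blast+
    hence "x i + - w i \<in> Q" by (intro add neg)
    thus ?thesis by simp
  qed
  moreover have "x i - w i = 0" if "i \<ge> n" for i
    using assms(2,3) that unfolding Qvec_def by simp
  ultimately show ?thesis unfolding Qvec_def by simp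
qed

lemma main:
  assumes Q: "subfield_real Q" and so: "semi_open Q n W" and w: "w \<in> W"
    and F: "finite F" "\<forall>f\<in>F. contW n W f"
  shows "\<exists>h. direction_ok Q n h \<and> continues_into Q n W h w \<and>
     (\<forall>v\<in>F. decreasing_into Q n W v h w \<or> constant_into Q n W v h w \<or> increasing_into Q n W v h w)"
proof -
  have "\<forall>k::nat. \<exists>U. U \<noteq> {} \<and> openQ Q n U \<and> U \<subseteq> nbhd Q n w (1 / real (Suc k)) \<and> U \<subseteq> W \<and>
     (\<forall>f\<in>F. \<forall>x\<in>U. \<forall>y\<in>U. sgn (f y - f w) = sgn (f x - f w))"
  proof
    fix k :: nat
    have so2: "\<forall>e>0. \<exists>U. U \<noteq> {} \<and> openQ Q n U \<and> U \<subseteq> nbhd Q n w e \<inter> W"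
      using so w unfolding semi_open_def by simp
    have "1 / real (Suc k) > 0" by simp
    then obtain U0 where U0: "U0 \<noteq> {}" "openQ Q n U0" "U0 \<subseteq> nbhd Q n w (1 / real (Suc k)) \<inter> W"
      using so2 by blast
    have U0W: "U0 \<subseteq> W" using U0(3) by simp
    obtain U1 where U1: "U1 \<noteq> {}" "openQ Q n U1" "U1 \<subseteq> U0"
        "\<forall>f\<in>F. \<forall>x\<in>U1. \<forall>y\<in>U1. sgn (f y - f w) = sgn (f x - f w)"
      using refineF[OF F(1) F(2) U0(2) U0(1) U0W, of w] by blast
    have "U1 \<subseteq> nbhd Q n w (1 / real (Suc k))" "U1 \<subseteq> W" using U1(3) U0(3) by auto
    thus "\<exists>U. U \<noteq> {} \<and> openQ Q n U \<and> U \<subseteq> nbhd Q n w (1 / real (Suc k)) \<and> U \<subseteq> W \<and>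
     (\<forall>f\<in>F. \<forall>x\<in>U. \<forall>y\<in>U. sgn (f y - f w) = sgn (f x - f w))"
      using U1 by (intro exI[of _ U1] conjI) assumption+
  qed
  from choice[OF this] obtain U where UU: "\<forall>k. U k \<noteq> {} \<and> openQ Q n (U k) \<and> U k \<subseteq> nbhd Q n w (1 / real (Suc k)) \<and> U k \<subseteq> W \<and>
     (\<forall>f\<in>F. \<forall>x\<in>U k. \<forall>y\<in>U k. sgn (f y - f w) = sgn (f x - f w))"
    by blast
  have U: "\<And>k. U k \<noteq> {}" "\<And>k. openQ Q n (U k)"
     "\<And>k. U k \<subseteq> nbhd Q n w (1 / real (Suc k))" "\<And>k. U k \<subseteq> W"
     "\<And>k. \<forall>f\<in>F. \<forall>x\<in>U k. \<forall>y\<in>U k. sgn (f y - f w) = sgn (f x - f w)"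
    using UU by blast+
  define x where "x k = (SOME z. z \<in> U k)" for k
  have xU: "x k \<in> U k" for k using U(1)[of k] unfolding x_def by (simp add: some_in_eq)
  define pat where "pat k = (\<lambda>f. if f \<in> F then sgn (f (x k) - f w) else undefined)" for k
  have "range pat \<subseteq> PiE F (\<lambda>_. {-1, 0, 1::real})"
    by (auto simp: pat_def PiE_def extensional_def sgn_if split: if_splits)
  hence fin: "finite (pat ` UNIV)" using F(1) by (meson finite_PiE finite.emptyI finite_insert finite_subset)
  obtain k0 where K: "infinite {k. pat k = pat k0}"
    using pigeonhole_infinite[OF infinite_UNIV_nat fin] by auto
  define K where "K = {k. pat k = pat k0}"
  have Kunb: "\<exists>k\<in>K. m \<le> k" for m
    using K unfolding K_def[symmetric] by (meson finite_nat_set_iff_bounded_le nle_le)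
  define kk where "kk a = (LEAST k. k \<in> K \<and> 1 / real (Suc k) \<le> a)" for a :: real
  have kk: "kk a \<in> K \<and> 1 / real (Suc (kk a)) \<le> a" if "a > 0" for a
  proof -
    obtain k where k: "k \<in> K" "nat \<lceil>1 / a\<rceil> \<le> k" using Kunb by blast
    have "1 / a \<le> real k" using k(2) by linarith
    hence "1 / a \<le> real (Suc k)" by simp
    hence "1 / real (Suc k) \<le> a" using that by (simp add: field_simps)
    thus ?thesis unfolding kk_def using k(1) by (rule_tac LeastI[of _ k]) auto
  qed
  define h where "h a = (if a \<le> 0 then (\<lambda>_. 0) else (\<lambda>i. x (kk a) i - w i))" for a :: real
  have wQ: "w \<in> Qvec Q n" using so w unfolding semi_open_def by blast
  have xQ: "x k \<in> Qvec Q n" for k using U(2)[of k] xU[of k] unfolding openQ_def by blast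
  have vadd_h: "vadd w (h a) = x (kk a)" if "a > 0" for a
    using that by (simp add: h_def vadd_def)
  have dist_h: "vdist n (h a) (h 0) < a" if "a > 0" for a
  proof -
    have "vdist n (h a) (h 0) = vdist n w (x (kk a))"
      using that by (simp add: h_def vdist_def power2_commute)
    also have "\<dots> < 1 / real (Suc (kk a))" using U(3) xU by (auto simp: nbhd_def)
    also have "\<dots> \<le> a" using kk[OF that] by simp
    finally show ?thesis .
  qed
  have dok: "direction_ok Q n h"
    unfolding direction_ok_def
  proof (intro conjI allI impI)
    fix a show "h a \<in> Qvec Q n"
      using Qvec_diff[OF Q xQ wQ] Q by (auto simp: h_def Qvec_def subfield_real_def)
  next
    show "h 0 = (\<lambda>_. 0)" by (simp add: h_def)
  next
    fix e :: real assume e: "e > 0"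
    show "\<exists>d>0. \<forall>a. \<bar>a\<bar> < d \<longrightarrow> vdist n (h a) (h 0) < e"
    proof (intro exI[of _ e] conjI allI impI)
      fix a :: real assume a: "\<bar>a\<bar> < e"
      show "vdist n (h a) (h 0) < e"
      proof (cases "a > 0")
        case True thus ?thesis using dist_h[OF True] a by simp
      next
        case False thus ?thesis using e by (simp add: h_def vdist_self)
      qed
    qed (rule e)
  qed
  have nb: "\<exists>e>0. nbhd Q n (vadd w (h a)) e \<subseteq> U (kk a)" if "a > 0" for a
    using U(2)[of "kk a"] xU vadd_h[OF that] unfolding openQ_def by metis
  have cont: "continues_into Q n W h w"
    unfolding continues_into_def using nb U(4) by (meson subset_trans zero_less_one)
  have mv: "moves_into (sgn (v (x k0) - v w)) Q n W v h w" if v: "v \<in> F" for v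
    unfolding moves_into_def
  proof (rule exI[of _ 1], rule conjI[OF zero_less_one], intro allI impI)
    fix a :: real assume a: "0 < a \<and> a < 1"
    obtain e where e: "e > 0" "nbhd Q n (vadd w (h a)) e \<subseteq> U (kk a)" using nb a by blast
    have pk: "pat (kk a) = pat k0" using kk a unfolding K_def by auto
    have "\<forall>y\<in>nbhd Q n (vadd w (h a)) e. sgn (v y - v w) = sgn (v (x k0) - v w)"
    proof
      fix y assume "y \<in> nbhd Q n (vadd w (h a)) e"
      hence "sgn (v y - v w) = sgn (v (x (kk a)) - v w)" using e U(5) xU v by blast
      also have "\<dots> = sgn (v (x k0) - v w)" using fun_cong[OF pk, of v] v by (simp add: pat_def)
      finally show "sgn (v y - v w) = sgn (v (x k0) - v w)" .
    qed
    thus "\<exists>e>0. nbhd Q n (vadd w (h a)) e \<subseteq> W \<and>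
        (\<forall>y\<in>nbhd Q n (vadd w (h a)) e. sgn (v y - v w) = sgn (v (x k0) - v w))"
      using e U(4) by blast
  qed
  have "\<forall>v\<in>F. decreasing_into Q n W v h w \<or> constant_into Q n W v h w \<or> increasing_into Q n W v h w"
  proof
    fix v assume v: "v \<in> F"
    have "sgn (v (x k0) - v w) \<in> {-1, 0, 1}" by (auto simp: sgn_if)
    thus "decreasing_into Q n W v h w \<or> constant_into Q n W v h w \<or> increasing_into Q n W v h w"
      using mv[OF v] unfolding decreasing_into_def constant_into_def increasing_into_def by auto
  qed
  thus ?thesis using dok cont by blast
qed

lemma finite_branchfuns: "finite (branchfuns T)"
  by (induction T) auto

fun fun_at :: "'l dtree \<Rightarrow> bool list \<Rightarrow> (vec \<Rightarrow> real)" where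
  "fun_at (Leaf x) ps = (\<lambda>_. 0)"
| "fun_at (Node v l r) [] = v"
| "fun_at (Node v l r) (True # ps) = fun_at l ps"
| "fun_at (Node v l r) (False # ps) = fun_at r ps"

lemma ties_lemma:
  assumes "\<And>pos. tb S w pos = decreasing_into Q (dim S) (wts S) (fun_at T0 pos) h w"
  shows "(\<forall>ps. fun_at T0 (pre @ ps) = fun_at T ps) \<Longrightarrow> ties_follow Q S tb w h pre T"
proof (induction T arbitrary: pre)
  case (Leaf x)
  then show ?case by simp
next
  case (Node v l r)
  have v: "fun_at T0 pre = v" using Node.prems[rule_format, of "[]"] by simp
  have L: "ties_follow Q S tb w h (pre @ [True]) l"
    using Node.IH(1)[of "pre @ [True]"] Node.prems[rule_format, of "True # _"] by simp
  have R: "ties_follow Q S tb w h (pre @ [False]) r"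
    using Node.IH(2)[of "pre @ [False]"] Node.prems[rule_format, of "False # _"] by simp
  show ?case using L R v assms by simp
qed

theorem theorem3:
  fixes Q :: "real set" and P :: "'l pstruct set" and A :: "'l pstruct \<Rightarrow> 'l dtree"
  assumes "subfield_real Q"
    and "wcop Q P"
    and "det_alg Q P A"
  shows "(\<forall>S\<in>P. \<forall>w\<in>wts S. \<exists>h. good_direction Q S (A S) w h)
       \<and> (\<exists>tb. uses_symbolic_perturbation Q P A tb)"
proof -
  have part1: "\<forall>S\<in>P. \<forall>w\<in>wts S. \<exists>h. good_direction Q S (A S) w h"
  proof (intro ballI)
    fix S w assume S: "S \<in> P" and w: "w \<in> wts S"
    have so: "semi_open Q (dim S) (wts S)" using assms(2) S by (simp add: wcop_def structure_ok_def)
    have c: "\<forall>f\<in>branchfuns (A S). contW (dim S) (wts S) f"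
      using assms(3) S by (simp add: det_alg_def tree_ok_def)
    show "\<exists>h. good_direction Q S (A S) w h"
      using main[OF assms(1) so w finite_branchfuns c] unfolding good_direction_def by blast
  qed
  define H where "H S w = (SOME h. good_direction Q S (A S) w h)" for S w
  define tb :: "'l policy" where
    "tb S w pos = decreasing_into Q (dim S) (wts S) (fun_at (A S) pos) (H S w) w" for S w pos
  have "uses_symbolic_perturbation Q P A tb"
    unfolding uses_symbolic_perturbation_def
  proof (intro ballI)
    fix S w assume S: "S \<in> P" and w: "w \<in> wts S"
    have g: "good_direction Q S (A S) w (H S w)"
    proof -
      have "\<exists>h. good_direction Q S (A S) w h" using part1 S w by blast
      thus ?thesis unfolding H_def by (rule someI_ex)
    qed
    have "ties_follow Q S tb w (H S w) [] (A S)"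
      by (rule ties_lemma[of tb S w Q "A S" "H S w"]) (simp_all add: tb_def)
    thus "\<exists>h. good_direction Q S (A S) w h \<and> ties_follow Q S tb w h [] (A S)" using g by blast
  qed
  thus ?thesis using part1 by blast
qed

end
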